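(* For every $s\in S$ and $u\in W$ one has in $Z$ \[ c(u^{-1}s)=\sum_{w\in W}{}^uY_{I_w}(s)\,\zeta(u)^\vee_{I_w},\qquad\text{where } {}^uY_{I_w}=uY_{I_w}u^{-1}. \]
   Context: Setting: $\Phi$ a finite real root system (simple roots $\Pi$, positive roots $\Phi_+$, negative roots $\Phi_-$, Coxeter group $W$), $\mathcal O$ its coefficient ring, $\Lambda$ a free $\mathcal O$-module with root lattice $\subset\Lambda\subset$ weight lattice; $F$ a one-dimensional commutative formal group law over a commutative ring $R$; $S$ the formal group ring ($R[[x_\lambda]]_{\lambda\in\Lambda}$ modulo the closure of $x_0=0$, $x_{\lambda+\mu}=F(x_\lambda,x_\mu)$; no completion if $F$ polynomial; in the non-crystallographic case $F$ additive, $R=\mathcal O$, $S=\mathrm{Sym}_{\mathcal O}\Lambda$), with $W$ acting by $w(x_\lambda)=x_{w(\lambda)}$. Assume all $x_\alpha$ regular and that for distinct positive roots $\alpha,\alpha'$, $x_\alpha\mid x_{\alpha'}f\Rightarrow x_\alpha\mid f$. $Q=S[1/x_\alpha]$, $Q_W$ the twisted group algebra (basis $\delta_w$, $\delta_wq=w(q)\delta_w$), acting on $Q$ by $q\delta_w(f)=q\,w(f)$. $Y_\alpha=\frac1{x_{-\alpha}}+\frac1{x_\alpha}\delta_{s_\alpha}$ (so $Y_\alpha(f)=\frac f{x_{-\alpha}}+\frac{s_\alpha(f)}{x_\alpha}$), $Y_i=Y_{\alpha_i}$. Fixed reduced words $I_w$, $Y_{I_w}=Y_{i_1}\cdots Y_{i_l}$,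 $I_w^{-1}$ reversed word. ${}^uY_{I_w}(s)$ means $u\big(Y_{I_w}(u^{-1}(s))\big)$. $\mathbb D$ = $R$-subalgebra of $Q_W$ generated by $S$ and the $Y_i$ (free left $S$-module on $\{Y_{I_w}\}$). $Z=\{(z_v)_{v\in W}\in\bigoplus_vS: z_{s_\alpha w}-z_w\in x_\alpha S\}$, identified with $\mathrm{Hom}_S(\mathbb D,S)$ via $\phi\mapsto(\phi(\delta_v))_v$. Hecke action $q\delta_w\bullet(z_v)_v=(v(q)z_{vw})_v$; Weyl action $q\delta_w\odot(z_v)_v=(q\,w(z_{w^{-1}v}))_v$. Characteristic map $c\colon S\to Z$, $c(f)=(v(f))_v$. $x_\Pi=\prod_{\alpha\in\Phi_-}x_\alpha$, $[e]$ with $e$-coordinate $x_\Pi$ and others $0$, $[v]=\delta_v\odot[e]$, $\zeta(v)_{I_w}=Y_{I_w^{-1}}\bullet[v]$, $\zeta_{I_w}=\zeta(e)_{I_w}$. $\zeta^\vee_{I_w}\in Z$ corresponds to the functional on $\mathbb D$ with $Y_{I_u}\mapsto\delta^{Kr}_{w,u}$, and $\zeta(u)^\vee_{I_w}:=\delta_u\odot\zeta^\vee_{I_w}$ (these form an $S$-basis of $Z$ dual to $\{\zeta(u)_{I_w}\}$ under $(z,z')\mapsto\pi\bullet(zz')$, where $\pi=\sum_w\frac1{w(x_\Pi)}\delta_w$). *)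

theory Defs
  imports "HOL-Analysis.Analysis"
begin

definition reflection :: "'v::real_inner \<Rightarrow> 'v \<Rightarrow> 'v" where
  "reflection a v = v - ((2 * (v \<bullet> a)) / (a \<bullet> a)) *\<^sub>R a"

definition root_system :: "'v::euclidean_space set \<Rightarrow> bool" where
  "root_system Phi \<longleftrightarrow> finite Phi \<and> 0 \<notin> Phi \<and>
     (\<forall>a\<in>Phi. \<forall>b\<in>Phi. reflection a b \<in> Phi) \<and>
     (\<forall>a\<in>Phi. \<forall>c::real. c *\<^sub>R a \<in> Phi \<longrightarrow> c = 1 \<or> c = -1)"

definition nonneg_comb :: "'v::euclidean_space list \<Rightarrow> 'v \<Rightarrow> bool" where
  "nonneg_comb Pis b \<longleftrightarrow>
     (\<exists>c::nat \<Rightarrow> real. (\<forall>i<length Pis. c i \<ge> 0) \<and> b = (\<Sum>i<length Pis. c i *\<^sub>R (Pis ! i)))"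

text \<open>Simple roots, listed as alpha_1, ..., alpha_n (index i stands for alpha_i = Pis ! i).\<close>
definition simple_system :: "'v::euclidean_space set \<Rightarrow> 'v list \<Rightarrow> bool" where
  "simple_system Phi Pis \<longleftrightarrow> distinct Pis \<and> set Pis \<subseteq> Phi \<and> independent (set Pis) \<and>
     (\<forall>b\<in>Phi. nonneg_comb Pis b \<or> nonneg_comb Pis (- b))"

definition pos_roots :: "'v::euclidean_space set \<Rightarrow> 'v list \<Rightarrow> 'v set" where
  "pos_roots Phi Pis = {b\<in>Phi. nonneg_comb Pis b}"

definition neg_roots :: "'v::euclidean_space set \<Rightarrow> 'v list \<Rightarrow> 'v set" where
  "neg_roots Phi Pis = {b\<in>Phi. nonneg_comb Pis (- b)}"

inductive_set weyl_group :: "'v::real_inner set \<Rightarrow> ('v \<Rightarrow> 'v) set" for Phi where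
  weyl_id: "id \<in> weyl_group Phi"
| weyl_step: "a \<in> Phi \<Longrightarrow> w \<in> weyl_group Phi \<Longrightarrow> reflection a \<circ> w \<in> weyl_group Phi"

definition word_prod :: "'v::real_inner list \<Rightarrow> nat list \<Rightarrow> 'v \<Rightarrow> 'v" where
  "word_prod Pis is = foldr (\<lambda>i w. reflection (Pis ! i) \<circ> w) is id"

definition reduced_word :: "'v::real_inner list \<Rightarrow> ('v \<Rightarrow> 'v) \<Rightarrow> nat list \<Rightarrow> bool" where
  "reduced_word Pis w is \<longleftrightarrow> (\<forall>i\<in>set is. i < length Pis) \<and> word_prod Pis is = w \<and>
     (\<forall>js. (\<forall>j\<in>set js. j < length Pis) \<and> word_prod Pis js = w \<longrightarrow> length is \<le> length js)"

text \<open>Inverse in the commutative ring Q (used only for units).\<close>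
definition rinv :: "'q::comm_ring_1 \<Rightarrow> 'q" where
  "rinv y = (THE z. y * z = 1)"

definition setting ::
  "'v::euclidean_space set \<Rightarrow> 'v list \<Rightarrow> 'q::comm_ring_1 set \<Rightarrow>
   (('v \<Rightarrow> 'v) \<Rightarrow> 'q \<Rightarrow> 'q) \<Rightarrow> ('v \<Rightarrow> 'q) \<Rightarrow> bool" where
  "setting Phi Pis S act x \<longleftrightarrow>
     root_system Phi \<and> simple_system Phi Pis \<and>
     \<comment> \<open>S is a subring of Q\<close>
     0 \<in> S \<and> 1 \<in> S \<and> (\<forall>f\<in>S. \<forall>g\<in>S. f + g \<in> S \<and> f - g \<in> S \<and> f * g \<in> S) \<and>
     \<comment> \<open>the x_alpha lie in S and are inverted in Q\<close>
     (\<forall>a\<in>Phi. x a \<in> S \<and> (\<exists>y. x a * y = 1)) \<and>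
     \<comment> \<open>Q = S[1/x_alpha]\<close>
     (\<forall>q. \<exists>f\<in>S. \<exists>k::nat. q * (\<Prod>a\<in>neg_roots Phi Pis. x a) ^ k = f) \<and>
     \<comment> \<open>divisibility hypothesis for distinct positive roots\<close>
     (\<forall>a\<in>pos_roots Phi Pis. \<forall>a'\<in>pos_roots Phi Pis. \<forall>f\<in>S. a \<noteq> a' \<longrightarrow>
        (\<exists>g\<in>S. x a' * f = x a * g) \<longrightarrow> (\<exists>g\<in>S. f = x a * g)) \<and>
     \<comment> \<open>W acts on Q by ring automorphisms, preserving S, with w(x_alpha) = x_{w(alpha)}\<close>
     (\<forall>q. act id q = q) \<and>
     (\<forall>w1\<in>weyl_group Phi. \<forall>w2\<in>weyl_group Phi. \<forall>q. act (w1 \<circ> w2) q = act w1 (act w2 q)) \<and>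
     (\<forall>w\<in>weyl_group Phi. act w 1 = 1 \<and>
        (\<forall>p q. act w (p + q) = act w p + act w q \<and> act w (p * q) = act w p * act w q) \<and>
        act w ` S \<subseteq> S \<and> (\<forall>a\<in>Phi. act w (x a) = x (w a)))"

text \<open>An element sum_w q_w delta_w of Q_W is represented by its coefficient function w |-> q_w
  (zero outside W).\<close>

definition tw_mult :: "('v::real_inner \<Rightarrow> 'v) set \<Rightarrow> (('v \<Rightarrow> 'v) \<Rightarrow> 'q::comm_ring_1 \<Rightarrow> 'q) \<Rightarrow>
    (('v \<Rightarrow> 'v) \<Rightarrow> 'q) \<Rightarrow> (('v \<Rightarrow> 'v) \<Rightarrow> 'q) \<Rightarrow> (('v \<Rightarrow> 'v) \<Rightarrow> 'q)" where
  "tw_mult W act p r = (\<lambda>y. if y \<in> W then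
      (\<Sum>a\<in>W. \<Sum>b\<in>W. if a \<circ> b = y then p a * act a (r b) else 0) else 0)"

definition tw_delta :: "('v \<Rightarrow> 'v) \<Rightarrow> (('v \<Rightarrow> 'v) \<Rightarrow> 'q::comm_ring_1)" where
  "tw_delta w = (\<lambda>y. if y = w then 1 else 0)"

definition Yalpha :: "('v \<Rightarrow> 'q::comm_ring_1) \<Rightarrow> 'v::real_inner \<Rightarrow> (('v \<Rightarrow> 'v) \<Rightarrow> 'q)" where
  "Yalpha x a = (\<lambda>y. (if y = id then rinv (x (- a)) else 0)
                    + (if y = reflection a then rinv (x a) else 0))"

definition Yword :: "'v::real_inner set \<Rightarrow> 'v list \<Rightarrow> (('v \<Rightarrow> 'v) \<Rightarrow> 'q::comm_ring_1 \<Rightarrow> 'q) \<Rightarrow>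
    ('v \<Rightarrow> 'q) \<Rightarrow> nat list \<Rightarrow> (('v \<Rightarrow> 'v) \<Rightarrow> 'q)" where
  "Yword Phi Pis act x is =
     foldr (\<lambda>i p. tw_mult (weyl_group Phi) act (Yalpha x (Pis ! i)) p) is (tw_delta id)"

definition tw_apply :: "('v::real_inner \<Rightarrow> 'v) set \<Rightarrow> (('v \<Rightarrow> 'v) \<Rightarrow> 'q::comm_ring_1 \<Rightarrow> 'q) \<Rightarrow>
    (('v \<Rightarrow> 'v) \<Rightarrow> 'q) \<Rightarrow> 'q \<Rightarrow> 'q" where
  "tw_apply W act p f = (\<Sum>w\<in>W. p w * act w f)"

text \<open>Elements z = (z_v)_v of Z correspond to functionals on D (extended Q-linearly to Q_W)
  via phi(delta_v) = z_v, i.e. phi(sum_v q_v delta_v) = sum_v q_v z_v.\<close>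
definition pairing :: "('v::real_inner \<Rightarrow> 'v) set \<Rightarrow> (('v \<Rightarrow> 'v) \<Rightarrow> 'q::comm_ring_1) \<Rightarrow>
    (('v \<Rightarrow> 'v) \<Rightarrow> 'q) \<Rightarrow> 'q" where
  "pairing W z p = (\<Sum>v\<in>W. p v * z v)"

definition zeta_dual :: "'v::real_inner set \<Rightarrow> 'v list \<Rightarrow> (('v \<Rightarrow> 'v) \<Rightarrow> 'q::comm_ring_1 \<Rightarrow> 'q) \<Rightarrow>
    ('v \<Rightarrow> 'q) \<Rightarrow> (('v \<Rightarrow> 'v) \<Rightarrow> nat list) \<Rightarrow> ('v \<Rightarrow> 'v) \<Rightarrow> (('v \<Rightarrow> 'v) \<Rightarrow> 'q)" where
  "zeta_dual Phi Pis act x I w = (THE z. (\<forall>v. v \<notin> weyl_group Phi \<longrightarrow> z v = 0) \<and>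
      (\<forall>u\<in>weyl_group Phi. pairing (weyl_group Phi) z (Yword Phi Pis act x (I u))
                            = (if u = w then 1 else 0)))"

definition weyl_dot :: "('v::real_inner \<Rightarrow> 'v) set \<Rightarrow> (('v \<Rightarrow> 'v) \<Rightarrow> 'q::comm_ring_1 \<Rightarrow> 'q) \<Rightarrow>
    ('v \<Rightarrow> 'v) \<Rightarrow> (('v \<Rightarrow> 'v) \<Rightarrow> 'q) \<Rightarrow> (('v \<Rightarrow> 'v) \<Rightarrow> 'q)" where
  "weyl_dot W act u z = (\<lambda>v. if v \<in> W then act u (z (inv u \<circ> v)) else 0)"

definition zeta_dual_u :: "'v::real_inner set \<Rightarrow> 'v list \<Rightarrow> (('v \<Rightarrow> 'v) \<Rightarrow> 'q::comm_ring_1 \<Rightarrow> 'q) \<Rightarrow>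
    ('v \<Rightarrow> 'q) \<Rightarrow> (('v \<Rightarrow> 'v) \<Rightarrow> nat list) \<Rightarrow> ('v \<Rightarrow> 'v) \<Rightarrow> ('v \<Rightarrow> 'v) \<Rightarrow> (('v \<Rightarrow> 'v) \<Rightarrow> 'q)" where
  "zeta_dual_u Phi Pis act x I u w = weyl_dot (weyl_group Phi) act u (zeta_dual Phi Pis act x I w)"

definition charmap :: "('v::real_inner \<Rightarrow> 'v) set \<Rightarrow> (('v \<Rightarrow> 'v) \<Rightarrow> 'q::comm_ring_1 \<Rightarrow> 'q) \<Rightarrow>
    'q \<Rightarrow> (('v \<Rightarrow> 'v) \<Rightarrow> 'q)" where
  "charmap W act f = (\<lambda>v. if v \<in> W then act v f else 0)"

definition conjY :: "'v::real_inner set \<Rightarrow> 'v list \<Rightarrow> (('v \<Rightarrow> 'v) \<Rightarrow> 'q::comm_ring_1 \<Rightarrow> 'q) \<Rightarrow>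
    ('v \<Rightarrow> 'q) \<Rightarrow> (('v \<Rightarrow> 'v) \<Rightarrow> nat list) \<Rightarrow> ('v \<Rightarrow> 'v) \<Rightarrow> ('v \<Rightarrow> 'v) \<Rightarrow> 'q \<Rightarrow> 'q" where
  "conjY Phi Pis act x I u w s =
     act u (tw_apply (weyl_group Phi) act (Yword Phi Pis act x (I w)) (act (inv u) s))"

end

theory Submission
  imports Defs "HOL-Library.FuncSet"
begin


lemma refl_invol:
  fixes a :: "'v::real_inner"
  assumes "a \<noteq> 0" shows "reflection a (reflection a v) = v"
proof -
  have aa: "a \<bullet> a \<noteq> 0" using assms by simp
  have "reflection a v \<bullet> a = - (v \<bullet> a)"
    using aa by (simp add: reflection_def inner_diff_left field_simps)
  then show ?thesis using aa
    by (simp add: reflection_def)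
qed

lemma refl_invol_comp:
  fixes a :: "'v::real_inner"
  assumes "a \<noteq> 0" shows "reflection a \<circ> reflection a = id"
  using refl_invol[OF assms] by (auto simp: fun_eq_iff)

lemma refl_neq_id:
  fixes a :: "'v::real_inner"
  assumes "a \<noteq> 0" shows "reflection a \<noteq> id"
proof
  assume "reflection a = id"
  then have "reflection a a = a" by simp
  moreover have "a \<bullet> a \<noteq> 0" using assms by simp
  ultimately have "- a = a" by (simp add: reflection_def algebra_simps scaleR_2)
  then have "a + a = 0" by (metis add.right_inverse)
  then have "(2::real) *\<^sub>R a = 0" by (simp add: scaleR_2)
  then have "a = 0" by simp
  then show False using assms by simp
qed

lemma refl_linear: "linear (reflection (a::'v::real_inner))"
  by (rule linearI) (simp_all add: reflection_def inner_add_left algebra_simps add_divide_distrib scaleR_add_left)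

lemma weyl_comp:
  "w1 \<in> weyl_group Phi \<Longrightarrow> w2 \<in> weyl_group Phi \<Longrightarrow> w1 \<circ> w2 \<in> weyl_group Phi"
  by (induction w1 rule: weyl_group.induct) (auto simp: o_assoc[symmetric] intro: weyl_group.intros)

lemma weyl_refl: "a \<in> Phi \<Longrightarrow> reflection a \<in> weyl_group Phi"
  using weyl_group.weyl_step[OF _ weyl_group.weyl_id, of a Phi] by simp

lemma weyl_bij: assumes "0 \<notin> Phi" "w \<in> weyl_group Phi" shows "bij w"
  using assms(2)
proof (induction w rule: weyl_group.induct)
  case weyl_id then show ?case by (rule bij_id)
next
  case (weyl_step a w)
  have "a \<noteq> 0" using weyl_step assms by auto
  then have "bij (reflection a)" using o_bij[OF refl_invol_comp refl_invol_comp] by blast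
  then show ?case using bij_comp[OF weyl_step.IH] by blast
qed

lemma weyl_inv: assumes "0 \<notin> Phi" "w \<in> weyl_group Phi" shows "inv w \<in> weyl_group Phi"
  using assms(2)
proof (induction w rule: weyl_group.induct)
  case weyl_id then show ?case by (simp only: inv_id) (rule weyl_group.weyl_id)
next
  case (weyl_step a w)
  have a0: "a \<noteq> 0" using weyl_step assms by auto
  have br: "bij (reflection a)" using weyl_bij[OF assms(1) weyl_refl] weyl_step by auto
  have bw: "bij w" using weyl_bij assms weyl_step by auto
  have ir: "inv (reflection a) = reflection a"
    using inv_unique_comp[OF refl_invol_comp[OF a0] refl_invol_comp[OF a0]] .
  have eq: "inv (reflection a \<circ> w) = inv w \<circ> reflection a"
    using o_inv_distrib[OF br bw] ir by simp
  show ?case unfolding eq by (rule weyl_comp[OF weyl_step.IH weyl_refl[OF weyl_step.hyps(1)]])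
qed

lemma weyl_props:
  assumes "root_system Phi" "w \<in> weyl_group Phi"
  shows "linear w \<and> w ` Phi \<subseteq> Phi \<and> (\<forall>v. (\<forall>a\<in>Phi. v \<bullet> a = 0) \<longrightarrow> w v = v)"
  using assms(2)
proof (induction w rule: weyl_group.induct)
  case weyl_id show ?case
  proof (intro conjI)
    show "linear id" by (rule linear_id)
    show "id ` Phi \<subseteq> Phi" by simp
    show "\<forall>v. (\<forall>a\<in>Phi. v \<bullet> a = 0) \<longrightarrow> id v = v" by simp
  qed
next
  case (weyl_step a w)
  have "linear (reflection a \<circ> w)" using weyl_step refl_linear linear_compose by blast
  moreover have "(reflection a \<circ> w) ` Phi \<subseteq> Phi" using weyl_step assms(1)
    unfolding root_system_def by auto
  moreover have "\<forall>v. (\<forall>a\<in>Phi. v \<bullet> a = 0) \<longrightarrow> (reflection a \<circ> w) v = v"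
    using weyl_step by (auto simp: reflection_def)
  ultimately show ?case by blast
qed

lemma weyl_finite:
  assumes "root_system Phi" shows "finite (weyl_group Phi)"
proof -
  have fP: "finite Phi" using assms unfolding root_system_def by auto
  have inj: "inj_on (\<lambda>w. restrict w Phi) (weyl_group Phi)"
  proof (rule inj_onI)
    fix w1 w2 assume w1: "w1 \<in> weyl_group Phi" and w2: "w2 \<in> weyl_group Phi"
      and eq: "restrict w1 Phi = restrict w2 Phi"
    have agree: "\<And>b. b \<in> Phi \<Longrightarrow> w1 b = w2 b" using eq by (metis restrict_apply')
    note p1 = weyl_props[OF assms w1] and p2 = weyl_props[OF assms w2]
    show "w1 = w2"
    proof
      fix v
      obtain y z where y: "y \<in> span Phi" and z: "\<And>w. w \<in> span Phi \<Longrightarrow> orthogonal z w"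
        and v: "v = y + z" using orthogonal_subspace_decomp_exists by blast
      have zo: "\<forall>a\<in>Phi. z \<bullet> a = 0" using z span_base orthogonal_def by blast
      have "w1 y = w2 y" using linear_eq_on_span[of w1 w2 Phi y] p1 p2 agree y by blast
      moreover have "w1 z = z" "w2 z = z" using p1 p2 zo by auto
      moreover have "w1 v = w1 y + w1 z" "w2 v = w2 y + w2 z"
        using p1 p2 v linear_add by metis+
      ultimately show "w1 v = w2 v" by simp
    qed
  qed
  have "(\<lambda>w. restrict w Phi) ` weyl_group Phi \<subseteq> Phi \<rightarrow>\<^sub>E Phi"
  proof (rule image_subsetI)
    fix w assume "w \<in> weyl_group Phi"
    then have "w ` Phi \<subseteq> Phi" using weyl_props[OF assms] by blast
    then show "restrict w Phi \<in> Phi \<rightarrow>\<^sub>E Phi" by (simp add: restrict_PiE_iff image_subset_iff)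
  qed
  moreover have "finite (Phi \<rightarrow>\<^sub>E Phi)" using fP by (simp add: finite_PiE)
  ultimately have "finite ((\<lambda>w. restrict w Phi) ` weyl_group Phi)" by (rule finite_subset)
  then show ?thesis using inj by (rule finite_imageD)
qed



lemma tri_inj:
  fixes M :: "'w \<Rightarrow> 'w \<Rightarrow> 'q::comm_ring_1" and l :: "'w \<Rightarrow> nat"
  assumes fin: "finite W"
    and tri: "\<forall>u\<in>W. \<forall>v\<in>W. M u v \<noteq> 0 \<longrightarrow> v = u \<or> l v < l u"
    and un: "\<forall>u\<in>W. \<exists>c. M u u * c = 1"
    and hz: "\<forall>u\<in>W. (\<Sum>v\<in>W. M u v * z v) = 0"
  shows "\<forall>v\<in>W. z v = 0"
proof
  fix v assume "v \<in> W"
  then show "z v = 0"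
  proof (induction "l v" arbitrary: v rule: less_induct)
    case (less v)
    have rest: "(\<Sum>v'\<in>W - {v}. M v v' * z v') = 0"
    proof (rule sum.neutral, rule ballI)
      fix v' assume v': "v' \<in> W - {v}"
      show "M v v' * z v' = 0"
      proof (cases "M v v' = 0")
        case False
        then have "l v' < l v" using tri less.prems v' by auto
        then have "z v' = 0" using less.hyps v' by auto
        then show ?thesis by simp
      qed simp
    qed
    have "(\<Sum>v'\<in>W. M v v' * z v') = M v v * z v + (\<Sum>v'\<in>W - {v}. M v v' * z v')"
      using sum.remove[OF fin less.prems] .
    then have m0: "M v v * z v = 0" using hz less.prems rest by simp
    obtain c where c: "M v v * c = 1" using un less.prems by blast
    have "z v = z v * (M v v * c)" using c by simp
    also have "\<dots> = (M v v * z v) * c" by (simp add: ac_simps)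
    finally show ?case using m0 by simp
  qed
qed

lemma tri_ex:
  fixes M :: "'w \<Rightarrow> 'w \<Rightarrow> 'q::comm_ring_1" and l :: "'w \<Rightarrow> nat"
  assumes fin: "finite W"
    and tri: "\<forall>u\<in>W. \<forall>v\<in>W. M u v \<noteq> 0 \<longrightarrow> v = u \<or> l v < l u"
    and un: "\<forall>u\<in>W. \<exists>c. M u u * c = 1"
  shows "\<exists>z. \<forall>u\<in>W. (\<Sum>v\<in>W. M u v * z v) = t u"
proof -
  define c where "c v = (SOME c. M v v * c = 1)" for v
  have cM: "M v v * c v = 1" if "v \<in> W" for v
    using un that unfolding c_def by (metis (mono_tags, lifting) someI_ex)
  have "\<exists>z. \<forall>u\<in>W. l u < k \<longrightarrow> (\<Sum>v\<in>W. M u v * z v) = t u" for k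
  proof (induction k)
    case 0 then show ?case by simp
  next
    case (Suc k)
    then obtain z where z: "\<forall>u\<in>W. l u < k \<longrightarrow> (\<Sum>v\<in>W. M u v * z v) = t u" by blast
    define z' where "z' v = (if v \<in> W \<and> l v = k then z v + c v * (t v - (\<Sum>v'\<in>W. M v v' * z v')) else z v)" for v
    have "(\<Sum>v\<in>W. M u v * z' v) = t u" if u: "u \<in> W" "l u < Suc k" for u
    proof (cases "l u < k")
      case True
      have "(\<Sum>v\<in>W. M u v * z' v) = (\<Sum>v\<in>W. M u v * z v)"
      proof (rule sum.cong[OF refl])
        fix v assume v: "v \<in> W"
        show "M u v * z' v = M u v * z v"
        proof (cases "M u v = 0")
          case False
          then have "v = u \<or> l v < l u" using tri u v by auto
          then have "l v < k" using True by auto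
          then show ?thesis by (simp add: z'_def)
        qed simp
      qed
      then show ?thesis using z True u by simp
    next
      case False
      then have lu: "l u = k" using u by simp
      define S where "S = (\<Sum>v'\<in>W. M u v' * z v')"
      have "(\<Sum>v\<in>W. M u v * z' v) = (\<Sum>v\<in>W. M u v * z v + (if v = u then M u u * c u * (t u - S) else 0))"
      proof (rule sum.cong[OF refl])
        fix v assume v: "v \<in> W"
        show "M u v * z' v = M u v * z v + (if v = u then M u u * c u * (t u - S) else 0)"
        proof (cases "v = u")
          case True
          then show ?thesis using lu v by (simp add: z'_def S_def algebra_simps)
        next
          case False
          show ?thesis
          proof (cases "M u v = 0")
            case nz: False
            then have "l v < l u" using tri u v False by auto
            then show ?thesis using False lu by (simp add: z'_def)
          qed (use False in simp)
        qed
      qed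
      also have "\<dots> = S + M u u * c u * (t u - S)"
        by (simp add: sum.distrib S_def u fin)
      also have "\<dots> = t u" using cM[OF u(1)] by simp
      finally show ?thesis .
    qed
    then show ?case by blast
  qed
  then obtain z where z: "\<forall>u\<in>W. l u < Suc (Max (l ` W)) \<longrightarrow> (\<Sum>v\<in>W. M u v * z v) = t u" by blast
  have "\<forall>u\<in>W. l u < Suc (Max (l ` W))" using fin by (simp add: le_imp_less_Suc)
  then show ?thesis using z by blast
qed

lemma tri_inverse:
  fixes M :: "'w \<Rightarrow> 'w \<Rightarrow> 'q::comm_ring_1" and l :: "'w \<Rightarrow> nat"
  assumes fin: "finite W"
    and tri: "\<forall>u\<in>W. \<forall>v\<in>W. M u v \<noteq> 0 \<longrightarrow> v = u \<or> l v < l u"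
    and un: "\<forall>u\<in>W. \<exists>c. M u u * c = 1"
    and Zdef: "\<And>w. Z w = (THE z. (\<forall>v. v \<notin> W \<longrightarrow> z v = 0) \<and>
                  (\<forall>u\<in>W. (\<Sum>v\<in>W. M u v * z v) = (if u = w then 1 else 0)))"
  shows "\<forall>w\<in>W. \<forall>u\<in>W. (\<Sum>v\<in>W. M u v * Z w v) = (if u = w then 1 else 0)"
    and "\<forall>y\<in>W. \<forall>v\<in>W. (\<Sum>w\<in>W. M w y * Z w v) = (if v = y then 1 else 0)"
proof -
  have Zp: "\<forall>u\<in>W. (\<Sum>v\<in>W. M u v * Z w v) = (if u = w then 1 else 0)" for w
  proof -
    let ?P = "\<lambda>z. (\<forall>v. v \<notin> W \<longrightarrow> z v = 0) \<and>
                  (\<forall>u\<in>W. (\<Sum>v\<in>W. M u v * z v) = (if u = w then 1 else 0))"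
    obtain z0 where z0: "\<forall>u\<in>W. (\<Sum>v\<in>W. M u v * z0 v) = (if u = w then 1 else 0)"
      using tri_ex[OF fin tri un, of "\<lambda>u. if u = w then 1 else 0"] by blast
    define z1 where "z1 v = (if v \<in> W then z0 v else 0)" for v
    have "?P z1" using z0 by (simp add: z1_def)
    moreover have "z = z1" if "?P z" for z
    proof
      fix v
      have "\<forall>u\<in>W. (\<Sum>v\<in>W. M u v * (z v - z1 v)) = 0"
        using that \<open>?P z1\<close> by (simp add: right_diff_distrib sum_subtractf)
      then have "\<forall>v\<in>W. z v - z1 v = 0" using tri_inj[OF fin tri un, where z="\<lambda>v. z v - z1 v"] by simp
      then show "z v = z1 v" using that \<open>?P z1\<close> by (cases "v \<in> W") auto
    qed
    ultimately have "?P (THE z. ?P z)" by (rule theI)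
    then show ?thesis unfolding Zdef by blast
  qed
  then show "\<forall>w\<in>W. \<forall>u\<in>W. (\<Sum>v\<in>W. M u v * Z w v) = (if u = w then 1 else 0)" by blast
  show "\<forall>y\<in>W. \<forall>v\<in>W. (\<Sum>w\<in>W. M w y * Z w v) = (if v = y then 1 else 0)"
  proof (rule ballI)
    fix y assume y: "y \<in> W"
    define z' where "z' v = (\<Sum>w\<in>W. M w y * Z w v) - (if v = y then 1 else 0)" for v
    have "(\<Sum>v\<in>W. M u v * z' v) = 0" if u: "u \<in> W" for u
    proof -
      have e: "M u v * z' v = (\<Sum>w\<in>W. M w y * (M u v * Z w v)) - (if v = y then M u y else 0)" for v
        by (simp add: z'_def right_diff_distrib sum_distrib_left mult.left_commute)
      have "(\<Sum>v\<in>W. M u v * z' v) = (\<Sum>v\<in>W. \<Sum>w\<in>W. M w y * (M u v * Z w v)) - (\<Sum>v\<in>W. (if v = y then M u y else 0))"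
        unfolding e by (rule sum_subtractf)
      also have "(\<Sum>v\<in>W. \<Sum>w\<in>W. M w y * (M u v * Z w v)) = (\<Sum>w\<in>W. M w y * (\<Sum>v\<in>W. M u v * Z w v))"
        unfolding sum_distrib_left by (rule sum.swap)
      also have "\<dots> = (\<Sum>w\<in>W. (if w = u then M u y else 0))"
        by (rule sum.cong[OF refl]) (use Zp u in auto)
      also have "\<dots> = M u y" using u fin by (simp add: sum.delta)
      also have "(\<Sum>v\<in>W. (if v = y then M u y else 0)) = M u y" using y fin by (simp add: sum.delta)
      finally show ?thesis by simp
    qed
    then have "\<forall>v\<in>W. z' v = 0" using tri_inj[OF fin tri un] by blast
    then show "\<forall>v\<in>W. (\<Sum>w\<in>W. M w y * Z w v) = (if v = y then 1 else 0)"
      by (simp add: z'_def)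
  qed
qed



lemma rinv_unit: assumes "\<exists>y. (a::'q::comm_ring_1) * y = 1" shows "a * rinv a = 1"
proof -
  obtain y where y: "a * y = 1" using assms by blast
  have "(THE z. a * z = 1) = y"
  proof (rule the_equality)
    fix z assume z: "a * z = 1"
    have "z = z * (a * y)" using y by simp
    also have "\<dots> = y * (a * z)" by (simp add: ac_simps)
    also have "\<dots> = y" using z by simp
    finally show "z = y" .
  qed (rule y)
  then show ?thesis using y by (simp add: rinv_def)
qed

lemma word_prod_Nil: "word_prod Pis [] = id"
  by (simp add: word_prod_def)

lemma word_prod_Cons: "word_prod Pis (i # is) = reflection (Pis ! i) \<circ> word_prod Pis is"
  by (simp add: word_prod_def)

lemma setting_facts:
  assumes "setting Phi Pis S act x"
  shows "root_system Phi" "0 \<notin> Phi" "set Pis \<subseteq> Phi"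
    "\<And>a. a \<in> Phi \<Longrightarrow> \<exists>y. x a * y = 1"
    "\<And>q. act id q = q"
    "\<And>w1 w2 q. w1 \<in> weyl_group Phi \<Longrightarrow> w2 \<in> weyl_group Phi \<Longrightarrow> act (w1 \<circ> w2) q = act w1 (act w2 q)"
    "\<And>w. w \<in> weyl_group Phi \<Longrightarrow> act w 1 = 1"
    "\<And>w p q. w \<in> weyl_group Phi \<Longrightarrow> act w (p + q) = act w p + act w q"
    "\<And>w p q. w \<in> weyl_group Phi \<Longrightarrow> act w (p * q) = act w p * act w q"
  using assms unfolding setting_def root_system_def simple_system_def by auto

lemma act_zero:
  assumes "setting Phi Pis S act x" "w \<in> weyl_group Phi" shows "act w 0 = 0"
proof -
  have "act w (0 + 0) = act w 0 + act w 0" using setting_facts(8)[OF assms] .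
  then show ?thesis by simp
qed

lemma act_sum:
  assumes "setting Phi Pis S act x" "w \<in> weyl_group Phi"
  shows "act w (\<Sum>y\<in>A. f y) = (\<Sum>y\<in>A. act w (f y))"
proof (cases "finite A")
  case True
  then show ?thesis
    by (induction A rule: finite_induct) (simp_all add: act_zero[OF assms] setting_facts(8)[OF assms])
qed (simp add: act_zero[OF assms])

lemma word_prod_in:
  "\<forall>i\<in>set is. i < length Pis \<Longrightarrow> set Pis \<subseteq> Phi \<Longrightarrow> word_prod Pis is \<in> weyl_group Phi"
proof (induction "is")
  case Nil then show ?case by (simp only: word_prod_Nil) (rule weyl_group.weyl_id)
next
  case (Cons i "is")
  then have "Pis ! i \<in> Phi" by auto
  then show ?case unfolding word_prod_Cons by (rule weyl_group.weyl_step) (use Cons in auto)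
qed

lemma tw_mult_Yalpha:
  assumes st: "setting Phi Pis S act x" and a: "a \<in> Phi"
  shows "tw_mult (weyl_group Phi) act (Yalpha x a) r y =
    (if y \<in> weyl_group Phi then rinv (x (- a)) * r y + rinv (x a) * act (reflection a) (r (reflection a \<circ> y)) else 0)"
proof (cases "y \<in> weyl_group Phi")
  case False then show ?thesis by (simp add: tw_mult_def)
next
  case y: True
  let ?W = "weyl_group Phi"
  let ?s = "reflection a"
  have fin: "finite ?W" using weyl_finite setting_facts(1)[OF st] by blast
  have a0: "a \<noteq> 0" using a setting_facts(2)[OF st] by auto
  have sid: "?s \<noteq> id" using refl_neq_id[OF a0] .
  have sW: "?s \<in> ?W" using weyl_refl[OF a] .
  have ss: "?s \<circ> ?s = id" using refl_invol_comp[OF a0] .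
  have syW: "?s \<circ> y \<in> ?W" using weyl_comp[OF sW y] .
  define g where "g a' = (\<Sum>b\<in>?W. if a' \<circ> b = y then Yalpha x a a' * act a' (r b) else 0)" for a'
  have "tw_mult ?W act (Yalpha x a) r y = (\<Sum>a'\<in>?W. g a')"
    using y by (simp add: tw_mult_def g_def)
  also have "\<dots> = (\<Sum>a'\<in>{id, ?s}. g a')"
  proof (rule sum.mono_neutral_right[OF fin])
    show "{id, ?s} \<subseteq> ?W" using sW weyl_group.weyl_id by blast
    show "\<forall>i\<in>?W - {id, ?s}. g i = 0"
    proof (rule ballI)
      fix i assume "i \<in> ?W - {id, ?s}"
      then have "Yalpha x a i = 0" by (simp add: Yalpha_def)
      then show "g i = 0" unfolding g_def by (intro sum.neutral) simp
    qed
  qed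
  also have "\<dots> = g id + g ?s" using sid by simp
  also have "g id = rinv (x (- a)) * r y"
  proof -
    have "g id = (\<Sum>b\<in>?W. if b = y then Yalpha x a id * act id (r b) else 0)"
      by (simp add: g_def)
    also have "\<dots> = Yalpha x a id * act id (r y)" using y fin by (simp add: sum.delta')
    finally show ?thesis using sid setting_facts(5)[OF st] by (simp add: Yalpha_def)
  qed
  also have "g ?s = rinv (x a) * act ?s (r (?s \<circ> y))"
  proof -
    have eq: "(?s \<circ> b = y) = (b = ?s \<circ> y)" for b
    proof
      assume "?s \<circ> b = y" then have "?s \<circ> (?s \<circ> b) = ?s \<circ> y" by simp
      then show "b = ?s \<circ> y" using ss by (metis comp_assoc id_comp)
    next
      assume "b = ?s \<circ> y" then show "?s \<circ> b = y" using ss by (metis comp_assoc id_comp)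
    qed
    have "g ?s = (\<Sum>b\<in>?W. if b = ?s \<circ> y then Yalpha x a ?s * act ?s (r b) else 0)"
      unfolding g_def eq by simp
    also have "\<dots> = Yalpha x a ?s * act ?s (r (?s \<circ> y))" using syW fin by (simp add: sum.delta')
    finally show ?thesis using sid by (simp add: Yalpha_def)
  qed
  finally show ?thesis using y by simp
qed



lemma Yword_Cons: "Yword Phi Pis act x (i # is) = tw_mult (weyl_group Phi) act (Yalpha x (Pis ! i)) (Yword Phi Pis act x is)"
  by (simp add: Yword_def)

lemma Yword_decomp:
  assumes st: "setting Phi Pis S act x"
  shows "\<forall>i\<in>set is. i < length Pis \<Longrightarrow> \<exists>c B. (\<exists>c'. c * c' = 1) \<and>
     (\<forall>y. Yword Phi Pis act x is y = (if y = word_prod Pis is then c else 0) + B y) \<and>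
     (\<forall>y. B y \<noteq> 0 \<longrightarrow> (\<exists>js. (\<forall>j\<in>set js. j < length Pis) \<and> length js < length is \<and> word_prod Pis js = y))"
proof (induction "is")
  case Nil
  show ?case
    by (rule exI[of _ 1], rule exI[of _ "\<lambda>_. 0"])
       (simp add: Yword_def tw_delta_def word_prod_Nil id_def)
next
  case (Cons i "is")
  let ?W = "weyl_group Phi"
  have valid: "\<forall>i\<in>set is. i < length Pis" "i < length Pis" using Cons.prems by auto
  obtain c B where cu: "\<exists>c'. c * c' = 1"
    and dec: "\<forall>y. Yword Phi Pis act x is y = (if y = word_prod Pis is then c else 0) + B y"
    and supp: "\<forall>y. B y \<noteq> 0 \<longrightarrow> (\<exists>js. (\<forall>j\<in>set js. j < length Pis) \<and> length js < length is \<and> word_prod Pis js = y)"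
    using Cons.IH[OF valid(1)] by blast
  define a where "a = Pis ! i"
  define s where "s = reflection a"
  define w0 where "w0 = word_prod Pis is"
  have aP: "a \<in> Phi" using valid(2) setting_facts(3)[OF st] unfolding a_def by auto
  have a0: "a \<noteq> 0" using aP setting_facts(2)[OF st] by auto
  have sW: "s \<in> ?W" unfolding s_def using weyl_refl[OF aP] .
  have ss: "s \<circ> s = id" unfolding s_def using refl_invol_comp[OF a0] .
  have w0W: "w0 \<in> ?W" unfolding w0_def using word_prod_in[OF valid(1) setting_facts(3)[OF st]] .
  have sw0W: "s \<circ> w0 \<in> ?W" using weyl_comp[OF sW w0W] .
  have eqv: "(s \<circ> y = w0) = (y = s \<circ> w0)" for y
    using ss by (metis comp_assoc id_comp)
  have wp: "word_prod Pis (i # is) = s \<circ> w0" unfolding s_def a_def w0_def by (rule word_prod_Cons)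
  define c' where "c' = rinv (x a) * act s c"
  define A where "A y = (if y = w0 then c else 0)" for y
  define B' where "B' y = (if y \<in> ?W then rinv (x (- a)) * (A y + B y) + rinv (x a) * act s (B (s \<circ> y)) else 0)" for y
  have xa: "x a * rinv (x a) = 1" using rinv_unit setting_facts(4)[OF st aP] by blast
  have "\<exists>d. c' * d = 1"
  proof -
    obtain d where d: "c * d = 1" using cu by blast
    have "c' * (x a * act s d) = (x a * rinv (x a)) * (act s c * act s d)"
      by (simp add: c'_def ac_simps)
    also have "\<dots> = act s (c * d)" using xa setting_facts(9)[OF st sW] by simp
    also have "\<dots> = 1" using d setting_facts(7)[OF st sW] by simp
    finally show ?thesis by blast
  qed
  moreover have "\<forall>y. Yword Phi Pis act x (i # is) y = (if y = word_prod Pis (i # is) then c' else 0) + B' y"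
  proof
    fix y
    show "Yword Phi Pis act x (i # is) y = (if y = word_prod Pis (i # is) then c' else 0) + B' y"
    proof (cases "y \<in> ?W")
      case False
      then have "y \<noteq> s \<circ> w0" using sw0W by auto
      then show ?thesis using False unfolding Yword_Cons wp
        by (simp add: tw_mult_Yalpha[OF st aP] B'_def a_def[symmetric])
    next
      case True
      have r1: "Yword Phi Pis act x is y = A y + B y" using dec by (simp add: A_def w0_def)
      have r2: "Yword Phi Pis act x is (s \<circ> y) = A (s \<circ> y) + B (s \<circ> y)" using dec by (simp add: A_def w0_def)
      have r3: "act s (A (s \<circ> y)) = (if y = s \<circ> w0 then act s c else 0)"
        using eqv[of y] act_zero[OF st sW] by (simp add: A_def)
      have "Yword Phi Pis act x (i # is) y = rinv (x (- a)) * (A y + B y) + rinv (x a) * act s (A (s \<circ> y) + B (s \<circ> y))"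
        unfolding Yword_Cons a_def[symmetric] tw_mult_Yalpha[OF st aP] using True r1 r2
        by (simp add: s_def)
      also have "\<dots> = rinv (x (- a)) * (A y + B y) + rinv (x a) * act s (A (s \<circ> y)) + rinv (x a) * act s (B (s \<circ> y))"
        using setting_facts(8)[OF st sW] by (simp add: algebra_simps)
      also have "\<dots> = (if y = word_prod Pis (i # is) then c' else 0) + B' y"
        unfolding r3 wp using True by (simp add: B'_def c'_def algebra_simps)
      finally show ?thesis .
    qed
  qed
  moreover have "\<forall>y. B' y \<noteq> 0 \<longrightarrow> (\<exists>js. (\<forall>j\<in>set js. j < length Pis) \<and> length js < length (i # is) \<and> word_prod Pis js = y)"
  proof (intro allI impI)
    fix y assume nz: "B' y \<noteq> 0"
    then have "A y \<noteq> 0 \<or> B y \<noteq> 0 \<or> B (s \<circ> y) \<noteq> 0"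
      by (auto simp: B'_def act_zero[OF st sW] split: if_splits)
    then show "\<exists>js. (\<forall>j\<in>set js. j < length Pis) \<and> length js < length (i # is) \<and> word_prod Pis js = y"
    proof (elim disjE)
      assume "A y \<noteq> 0"
      then have "y = w0" by (simp add: A_def split: if_splits)
      then show ?thesis using valid(1) by (intro exI[of _ "is"]) (simp add: w0_def)
    next
      assume "B y \<noteq> 0"
      then obtain js where "(\<forall>j\<in>set js. j < length Pis) \<and> length js < length is \<and> word_prod Pis js = y"
        using supp by blast
      then show ?thesis by (intro exI[of _ js]) simp
    next
      assume "B (s \<circ> y) \<noteq> 0"
      then obtain js where js: "(\<forall>j\<in>set js. j < length Pis) \<and> length js < length is \<and> word_prod Pis js = s \<circ> y"
        using supp by blast
      have "word_prod Pis (i # js) = s \<circ> (s \<circ> y)" using js word_prod_Cons[of Pis i js]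
        by (simp add: s_def a_def)
      also have "\<dots> = y" using ss by (metis comp_assoc id_comp)
      finally show ?thesis using js valid(2) by (intro exI[of _ "i # js"]) simp
    qed
  qed
  ultimately show ?case by blast
qed



theorem lemma4p1:
  fixes Phi :: "'v::euclidean_space set" and Pis :: "'v list"
    and S :: "'q::comm_ring_1 set" and act :: "('v \<Rightarrow> 'v) \<Rightarrow> 'q \<Rightarrow> 'q"
    and x :: "'v \<Rightarrow> 'q" and I :: "('v \<Rightarrow> 'v) \<Rightarrow> nat list"
    and s :: 'q and u :: "'v \<Rightarrow> 'v"
  assumes "setting Phi Pis S act x"
    and "\<forall>w\<in>weyl_group Phi. reduced_word Pis w (I w)"
    and "s \<in> S" and "u \<in> weyl_group Phi"
  shows "charmap (weyl_group Phi) act (act (inv u) s) =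
         (\<lambda>v. \<Sum>w\<in>weyl_group Phi. conjY Phi Pis act x I u w s * zeta_dual_u Phi Pis act x I u w v)"
proof -
  note st = assms(1)
  let ?W = "weyl_group Phi"
  let ?M = "\<lambda>u v. Yword Phi Pis act x (I u) v"
  let ?l = "\<lambda>v. length (I v)"
  let ?Z = "zeta_dual Phi Pis act x I"
  have fin: "finite ?W" using weyl_finite setting_facts(1)[OF st] by blast
  have red: "\<And>w. w \<in> ?W \<Longrightarrow> reduced_word Pis w (I w)" using assms(2) by blast
  have key: "(\<exists>c. ?M w w * c = 1) \<and> (\<forall>v\<in>?W. ?M w v \<noteq> 0 \<longrightarrow> v = w \<or> ?l v < ?l w)"
    if w: "w \<in> ?W" for w
  proof -
    have rw: "reduced_word Pis w (I w)" using red[OF w] .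
    have valid: "\<forall>i\<in>set (I w). i < length Pis" and wpw: "word_prod Pis (I w) = w"
      and minl: "\<And>js. (\<forall>j\<in>set js. j < length Pis) \<Longrightarrow> word_prod Pis js = w \<Longrightarrow> length (I w) \<le> length js"
      using rw unfolding reduced_word_def by auto
    obtain c B where cu: "\<exists>c'. c * c' = 1"
      and dec: "\<forall>y. ?M w y = (if y = word_prod Pis (I w) then c else 0) + B y"
      and supp: "\<forall>y. B y \<noteq> 0 \<longrightarrow> (\<exists>js. (\<forall>j\<in>set js. j < length Pis) \<and> length js < length (I w) \<and> word_prod Pis js = y)"
      using Yword_decomp[OF st valid] by blast
    have Bw: "B w = 0"
    proof (rule ccontr)
      assume "B w \<noteq> 0"
      then obtain js where "(\<forall>j\<in>set js. j < length Pis)" "length js < length (I w)" "word_prod Pis js = w"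
        using supp by blast
      then show False using minl by fastforce
    qed
    have "?M w w = c" using dec Bw wpw by simp
    then have "\<exists>c. ?M w w * c = 1" using cu by simp
    moreover have "\<forall>v\<in>?W. ?M w v \<noteq> 0 \<longrightarrow> v = w \<or> ?l v < ?l w"
    proof (intro ballI impI)
      fix v assume v: "v \<in> ?W" and nz: "?M w v \<noteq> 0"
      show "v = w \<or> ?l v < ?l w"
      proof (cases "v = w")
        case False
        then have "B v \<noteq> 0" using nz dec wpw by simp
        then obtain js where js: "(\<forall>j\<in>set js. j < length Pis)" "length js < length (I w)" "word_prod Pis js = v"
          using supp by blast
        have "length (I v) \<le> length js" using red[OF v] js unfolding reduced_word_def by blast
        then show ?thesis using js by simp
      qed simp
    qed
    ultimately show ?thesis by blast
  qed
  have tri: "\<forall>u\<in>?W. \<forall>v\<in>?W. ?M u v \<noteq> 0 \<longrightarrow> v = u \<or> ?l v < ?l u" using key by blast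
  have un: "\<forall>u\<in>?W. \<exists>c. ?M u u * c = 1" using key by blast
  have Zdef: "\<And>w. ?Z w = (THE z. (\<forall>v. v \<notin> ?W \<longrightarrow> z v = 0) \<and>
                  (\<forall>u\<in>?W. (\<Sum>v\<in>?W. ?M u v * z v) = (if u = w then 1 else 0)))"
    by (simp add: zeta_dual_def pairing_def)
  have ZM: "\<forall>y\<in>?W. \<forall>v\<in>?W. (\<Sum>w\<in>?W. ?M w y * ?Z w v) = (if v = y then 1 else 0)"
    using tri_inverse(2)[OF fin tri un Zdef] .
  have iu: "inv u \<in> ?W" using weyl_inv[OF setting_facts(2)[OF st] assms(4)] .
  have uiu: "u \<circ> inv u = id"
    using weyl_bij[OF setting_facts(2)[OF st] assms(4)] using bij_is_surj surj_iff by blast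
  define t where "t = act (inv u) s"
  show ?thesis
  proof (rule ext)
    fix v
    show "charmap ?W act (act (inv u) s) v =
         (\<Sum>w\<in>?W. conjY Phi Pis act x I u w s * zeta_dual_u Phi Pis act x I u w v)"
    proof (cases "v \<in> ?W")
      case False
      then show ?thesis by (simp add: charmap_def zeta_dual_u_def weyl_dot_def)
    next
      case v: True
      define v' where "v' = inv u \<circ> v"
      have v'W: "v' \<in> ?W" unfolding v'_def using weyl_comp[OF iu v] .
      have uv': "u \<circ> v' = v" unfolding v'_def using uiu by (metis comp_assoc id_comp)
      have "(\<Sum>w\<in>?W. conjY Phi Pis act x I u w s * zeta_dual_u Phi Pis act x I u w v)
          = (\<Sum>w\<in>?W. act u ((\<Sum>y\<in>?W. ?M w y * act y t) * ?Z w v'))"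
        using v setting_facts(9)[OF st assms(4)]
        by (simp add: conjY_def zeta_dual_u_def weyl_dot_def tw_apply_def t_def v'_def)
      also have "\<dots> = act u (\<Sum>w\<in>?W. (\<Sum>y\<in>?W. ?M w y * act y t) * ?Z w v')"
        by (rule act_sum[OF st assms(4), symmetric])
      also have "(\<Sum>w\<in>?W. (\<Sum>y\<in>?W. ?M w y * act y t) * ?Z w v')
          = (\<Sum>y\<in>?W. act y t * (\<Sum>w\<in>?W. ?M w y * ?Z w v'))"
        unfolding sum_distrib_right sum_distrib_left
        by (subst sum.swap) (simp add: ac_simps)
      also have "\<dots> = (\<Sum>y\<in>?W. (if y = v' then act y t else 0))"
        by (rule sum.cong[OF refl]) (use ZM v'W in auto)
      also have "\<dots> = act v' t" using v'W fin by (simp add: sum.delta)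
      also have "act u (act v' t) = act v t"
        using setting_facts(6)[OF st assms(4) v'W, of t] uv' by simp
      finally show ?thesis using v by (simp add: charmap_def t_def)
    qed
  qed
qed

end
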